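(* Let $\alpha,\beta\in CBV^*[0,1]$ and $v,w\in CBV[0,1]$ satisfy $\alpha[e]=\beta[e]=0$, where $e(t)=1$ for $t\in[0,1]$, and $v(t)+w(t)=1$ for every $t\in[0,1]$. Define $F_1(x)(t)=\alpha[x]v(t)+\beta[x]w(t)$, $t\in[0,1]$. Then $F_1\colon CBV[0,1]\to CBV[0,1]$ is a bounded linear operator with $\|F_1\|\le\|\alpha\|+\|\alpha-\beta\|\cdot\|w\|_{BV}$ and $\|F_1^{n+2}\|\le\|\alpha-\beta\|\cdot|\alpha[v]-\beta[v]|^n\cdot\|\alpha[v]v+\beta[v]w\|_{BV}$ for all $n\ge0$. In particular, the spectral radius satisfies $r(F_1)\le|\alpha[v]-\beta[v]|$.
   Context: $BV[0,1]$ is the Banach space of real functions of bounded (Jordan) variation on $[0,1]$ with norm $\|f\|_{BV}=|f(0)|+\operatorname{var}_{[0,1]}f$, where $\operatorname{var}_{[0,1]}f=\sup\sum_{i=1}^n|f(t_i)-f(t_{i-1})|$ over all finite partitions $0=t_0<\dots<t_n=1$. $CBV[0,1]$ is its closed subspace of continuous functions, and $CBV^*[0,1]$ is its dual, with the operator norm. The norm of $F_1$ is the operator norm on $CBV[0,1]$; $r(A)=\lim_{n\to\infty}\|A^n\|^{1/n}$. By convention $|\alpha[v]-\beta[v]|^0=1$ even if $\alpha[v]-\beta[v]=0$. *)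

theory Defs
  imports "HOL-Analysis.Analysis"
begin

definition var_sums :: "(real \<Rightarrow> real) \<Rightarrow> real set" where
  "var_sums f = {(\<Sum>i<n. \<bar>f (t (Suc i)) - f (t i)\<bar>) | t n.
      t 0 = 0 \<and> t n = 1 \<and> (\<forall>i<n. t i < t (Suc i))}"

definition bounded_var :: "(real \<Rightarrow> real) \<Rightarrow> bool" where
  "bounded_var f \<longleftrightarrow> bdd_above (var_sums f)"

definition var01 :: "(real \<Rightarrow> real) \<Rightarrow> real" where
  "var01 f = Sup (var_sums f)"

definition bv_norm :: "(real \<Rightarrow> real) \<Rightarrow> real" where
  "bv_norm f = \<bar>f 0\<bar> + var01 f"

text \<open>Elements of CBV[0,1], represented canonically by functions vanishing outside [0,1].\<close>
definition cbv :: "(real \<Rightarrow> real) \<Rightarrow> bool" where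
  "cbv f \<longleftrightarrow> continuous_on {0..1} f \<and> bounded_var f \<and> (\<forall>t. t \<notin> {0..1} \<longrightarrow> f t = 0)"

definition cbv_dual :: "((real \<Rightarrow> real) \<Rightarrow> real) \<Rightarrow> bool" where
  "cbv_dual a \<longleftrightarrow>
     (\<forall>x y. cbv x \<longrightarrow> cbv y \<longrightarrow> a (\<lambda>t. x t + y t) = a x + a y) \<and>
     (\<forall>c x. cbv x \<longrightarrow> a (\<lambda>t. c * x t) = c * a x) \<and>
     (\<exists>C. \<forall>x. cbv x \<longrightarrow> \<bar>a x\<bar> \<le> C * bv_norm x)"

definition dual_norm :: "((real \<Rightarrow> real) \<Rightarrow> real) \<Rightarrow> real" where
  "dual_norm a = Sup {\<bar>a x\<bar> | x. cbv x \<and> bv_norm x \<le> 1}"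

definition cbv_bounded_linear :: "((real \<Rightarrow> real) \<Rightarrow> (real \<Rightarrow> real)) \<Rightarrow> bool" where
  "cbv_bounded_linear T \<longleftrightarrow>
     (\<forall>x. cbv x \<longrightarrow> cbv (T x)) \<and>
     (\<forall>x y. cbv x \<longrightarrow> cbv y \<longrightarrow> T (\<lambda>t. x t + y t) = (\<lambda>t. T x t + T y t)) \<and>
     (\<forall>c x. cbv x \<longrightarrow> T (\<lambda>t. c * x t) = (\<lambda>t. c * T x t)) \<and>
     (\<exists>C. \<forall>x. cbv x \<longrightarrow> bv_norm (T x) \<le> C * bv_norm x)"

definition op_norm :: "((real \<Rightarrow> real) \<Rightarrow> (real \<Rightarrow> real)) \<Rightarrow> real" where
  "op_norm T = Sup {bv_norm (T x) | x. cbv x \<and> bv_norm x \<le> 1}"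

definition spec_radius :: "((real \<Rightarrow> real) \<Rightarrow> (real \<Rightarrow> real)) \<Rightarrow> real" where
  "spec_radius T = lim (\<lambda>n. root n (op_norm (T ^^ n)))"

end

theory Submission
  imports Defs
begin


lemma sup_scale:
  fixes S :: "real set"
  assumes "S \<noteq> {}" "bdd_above S" "0 \<le> M"
  shows "Sup ((\<lambda>s. M * s) ` S) = M * Sup S"
proof (cases "M = 0")
  case True
  then have "(\<lambda>s. M * s) ` S = {0}" using assms(1) by auto
  then show ?thesis using True by simp
next
  case False
  then have M: "M > 0" using assms(3) by simp
  have bi: "bdd_above ((\<lambda>s. M * s) ` S)"
  proof -
    obtain B where "\<forall>s\<in>S. s \<le> B" using assms(2) by (auto simp: bdd_above_def)
    then have "\<forall>y\<in>(\<lambda>s. M * s) ` S. y \<le> M * B" using M by (auto intro: mult_left_mono)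
    then show ?thesis by (auto simp: bdd_above_def)
  qed
  show ?thesis
  proof (rule antisym)
    show "Sup ((\<lambda>s. M * s) ` S) \<le> M * Sup S"
      using assms M by (auto intro!: cSup_least mult_left_mono cSup_upper)
    have "Sup S \<le> Sup ((\<lambda>s. M * s) ` S) / M"
    proof (rule cSup_least[OF assms(1)])
      fix s assume "s \<in> S"
      then have "M * s \<le> Sup ((\<lambda>s. M * s) ` S)" using bi by (auto intro: cSup_upper)
      then show "s \<le> Sup ((\<lambda>s. M * s) ` S) / M" using M by (simp add: field_simps)
    qed
    then show "M * Sup S \<le> Sup ((\<lambda>s. M * s) ` S)" using M by (simp add: field_simps)
  qed
qed

lemma var_sums_elem: "\<bar>f 1 - f 0\<bar> \<in> var_sums f"
  unfolding var_sums_def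
  by (rule CollectI, rule exI[of _ "\<lambda>i. if i = 0 then 0 else 1"], rule exI[of _ 1]) auto

lemma var_sums_ne: "var_sums f \<noteq> {}" using var_sums_elem by blast

lemma var01_nonneg: "bounded_var f \<Longrightarrow> 0 \<le> var01 f"
  unfolding var01_def bounded_var_def
  by (rule order_trans[OF abs_ge_zero cSup_upper[OF var_sums_elem]])

lemma var_lin:
  assumes "bounded_var f" "bounded_var g" "s \<in> var_sums (\<lambda>t. a * f t + b * g t)"
  shows "s \<le> \<bar>a\<bar> * var01 f + \<bar>b\<bar> * var01 g"
proof -
  obtain t n where s: "s = (\<Sum>i<n. \<bar>(a * f (t (Suc i)) + b * g (t (Suc i))) - (a * f (t i) + b * g (t i))\<bar>)"
    and p: "t 0 = 0" "t n = 1" "\<forall>i<n. t i < t (Suc i)"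
    using assms(3) unfolding var_sums_def by blast
  have f: "(\<Sum>i<n. \<bar>f (t (Suc i)) - f (t i)\<bar>) \<le> var01 f"
    unfolding var01_def using assms(1) p unfolding bounded_var_def
    by (intro cSup_upper) (auto simp: var_sums_def)
  have g: "(\<Sum>i<n. \<bar>g (t (Suc i)) - g (t i)\<bar>) \<le> var01 g"
    unfolding var01_def using assms(2) p unfolding bounded_var_def
    by (intro cSup_upper) (auto simp: var_sums_def)
  have "s \<le> (\<Sum>i<n. \<bar>a\<bar> * \<bar>f (t (Suc i)) - f (t i)\<bar> + \<bar>b\<bar> * \<bar>g (t (Suc i)) - g (t i)\<bar>)"
    unfolding s
  proof (rule sum_mono)
    fix i
    have "\<bar>(a * f (t (Suc i)) + b * g (t (Suc i))) - (a * f (t i) + b * g (t i))\<bar>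
        = \<bar>a * (f (t (Suc i)) - f (t i)) + b * (g (t (Suc i)) - g (t i))\<bar>" by (simp add: algebra_simps)
    also have "\<dots> \<le> \<bar>a\<bar> * \<bar>f (t (Suc i)) - f (t i)\<bar> + \<bar>b\<bar> * \<bar>g (t (Suc i)) - g (t i)\<bar>"
      by (metis abs_mult abs_triangle_ineq)
    finally show "\<bar>(a * f (t (Suc i)) + b * g (t (Suc i))) - (a * f (t i) + b * g (t i))\<bar>
        \<le> \<bar>a\<bar> * \<bar>f (t (Suc i)) - f (t i)\<bar> + \<bar>b\<bar> * \<bar>g (t (Suc i)) - g (t i)\<bar>" .
  qed
  also have "\<dots> = \<bar>a\<bar> * (\<Sum>i<n. \<bar>f (t (Suc i)) - f (t i)\<bar>) + \<bar>b\<bar> * (\<Sum>i<n. \<bar>g (t (Suc i)) - g (t i)\<bar>)"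
    by (simp add: sum.distrib sum_distrib_left)
  also have "\<dots> \<le> \<bar>a\<bar> * var01 f + \<bar>b\<bar> * var01 g"
    using f g by (intro add_mono mult_left_mono) auto
  finally show ?thesis .
qed

lemma cbv_lin:
  assumes "cbv f" "cbv g"
  shows "cbv (\<lambda>t. a * f t + b * g t)"
    and "bv_norm (\<lambda>t. a * f t + b * g t) \<le> \<bar>a\<bar> * bv_norm f + \<bar>b\<bar> * bv_norm g"
proof -
  have bf: "bounded_var f" and bg: "bounded_var g" using assms by (auto simp: cbv_def)
  have bl: "bounded_var (\<lambda>t. a * f t + b * g t)"
    unfolding bounded_var_def using var_lin[OF bf bg] by (auto simp: bdd_above_def)
  show "cbv (\<lambda>t. a * f t + b * g t)"
    using assms bl unfolding cbv_def by (auto intro!: continuous_intros)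
  have v: "var01 (\<lambda>t. a * f t + b * g t) \<le> \<bar>a\<bar> * var01 f + \<bar>b\<bar> * var01 g"
    unfolding var01_def[of "\<lambda>t. a * f t + b * g t"]
    using var_lin[OF bf bg] var_sums_ne by (intro cSup_least) (auto simp: var01_def)
  have "\<bar>a * f 0 + b * g 0\<bar> \<le> \<bar>a\<bar> * \<bar>f 0\<bar> + \<bar>b\<bar> * \<bar>g 0\<bar>"
    by (metis abs_mult abs_triangle_ineq)
  then show "bv_norm (\<lambda>t. a * f t + b * g t) \<le> \<bar>a\<bar> * bv_norm f + \<bar>b\<bar> * bv_norm g"
    using v unfolding bv_norm_def by (simp add: algebra_simps)
qed

lemma var_sums_scale: "var_sums (\<lambda>t. c * f t) = (\<lambda>s. \<bar>c\<bar> * s) ` var_sums f"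
proof -
  have e: "\<And>t n. (\<Sum>i<n. \<bar>c * f (t (Suc i)) - c * f (t i)\<bar>) = \<bar>c\<bar> * (\<Sum>i<n. \<bar>f (t (Suc i)) - f (t i)\<bar>)"
    by (simp add: sum_distrib_left abs_mult flip: right_diff_distrib)
  show ?thesis unfolding var_sums_def e by auto
qed

lemma cbv_scale:
  assumes "cbv f"
  shows "cbv (\<lambda>t. c * f t)" and "bv_norm (\<lambda>t. c * f t) = \<bar>c\<bar> * bv_norm f"
proof -
  show "cbv (\<lambda>t. c * f t)" using cbv_lin(1)[OF assms assms, of c 0] by simp
  have bf: "bounded_var f" using assms by (auto simp: cbv_def)
  have "var01 (\<lambda>t. c * f t) = \<bar>c\<bar> * var01 f"
    unfolding var01_def var_sums_scale
    by (rule sup_scale[OF var_sums_ne bf[unfolded bounded_var_def]]) simp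
  then show "bv_norm (\<lambda>t. c * f t) = \<bar>c\<bar> * bv_norm f"
    by (simp add: bv_norm_def abs_mult algebra_simps)
qed

lemma bv_norm_nonneg: "cbv f \<Longrightarrow> 0 \<le> bv_norm f"
  unfolding bv_norm_def cbv_def using var01_nonneg by fastforce

lemma cbv_zero: "cbv (\<lambda>t. 0)" "bv_norm (\<lambda>t. 0) = 0"
proof -
  have c: "cbv (\<lambda>t::real. 0 :: real)" unfolding cbv_def bounded_var_def
    by (auto simp: var_sums_def bdd_above_def)
  show "cbv (\<lambda>t. 0)" by (rule c)
  show "bv_norm (\<lambda>t. 0) = 0" using cbv_scale(2)[OF c, of 0] by simp
qed

lemma dual_bdd:
  assumes "\<exists>C. \<forall>x. cbv x \<longrightarrow> \<bar>g x\<bar> \<le> C * bv_norm x"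
  shows "bdd_above {\<bar>g x\<bar> | x. cbv x \<and> bv_norm x \<le> 1}"
proof -
  obtain C where C: "\<forall>x. cbv x \<longrightarrow> \<bar>g x\<bar> \<le> C * bv_norm x" using assms by blast
  have "\<And>x. cbv x \<Longrightarrow> bv_norm x \<le> 1 \<Longrightarrow> \<bar>g x\<bar> \<le> \<bar>C\<bar>"
  proof -
    fix x assume "cbv x" "bv_norm x \<le> 1"
    moreover have "0 \<le> bv_norm x" using bv_norm_nonneg \<open>cbv x\<close> .
    ultimately have "C * bv_norm x \<le> \<bar>C\<bar>"
      by (metis abs_ge_self abs_ge_zero dual_order.trans mult_left_le mult_right_mono)
    then show "\<bar>g x\<bar> \<le> \<bar>C\<bar>" using C \<open>cbv x\<close> by force
  qed
  then show ?thesis by (auto simp: bdd_above_def)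
qed

lemma dual_bound:
  assumes sc: "\<forall>c x. cbv x \<longrightarrow> g (\<lambda>t. c * x t) = c * g x"
    and bd: "\<exists>C. \<forall>x. cbv x \<longrightarrow> \<bar>g x\<bar> \<le> C * bv_norm x"
    and x: "cbv x"
  shows "\<bar>g x\<bar> \<le> dual_norm g * bv_norm x"
proof (cases "bv_norm x = 0")
  case True
  obtain C where C: "\<forall>x. cbv x \<longrightarrow> \<bar>g x\<bar> \<le> C * bv_norm x" using bd by blast
  then show ?thesis using x True by force
next
  case False
  then have p: "bv_norm x > 0" using bv_norm_nonneg[OF x] by simp
  define y where "y = (\<lambda>t. (1 / bv_norm x) * x t)"
  have cy: "cbv y" and ny: "bv_norm y = 1"
    using cbv_scale[OF x, of "1 / bv_norm x"] p by (auto simp: y_def)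
  have "\<bar>g y\<bar> \<le> dual_norm g"
    unfolding dual_norm_def using cy ny by (intro cSup_upper dual_bdd[OF bd]) auto
  moreover have "g y = (1 / bv_norm x) * g x" using sc x unfolding y_def by blast
  ultimately show ?thesis using p by (simp add: abs_div field_simps)
qed

lemma dual_norm_nonneg:
  assumes "\<exists>C. \<forall>x. cbv x \<longrightarrow> \<bar>g x\<bar> \<le> C * bv_norm x"
  shows "0 \<le> dual_norm g"
  unfolding dual_norm_def
  by (rule order_trans[OF abs_ge_zero cSup_upper[OF _ dual_bdd[OF assms]]])
     (use cbv_zero in auto)



lemma part_mono:
  assumes "\<forall>i<n. t i < t (Suc i)" "i \<le> j" "j \<le> n"
  shows "(t i :: real) \<le> t j"
  using assms(2,3)
proof (induction j)
  case 0 then show ?case by simp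
next
  case (Suc j)
  show ?case
  proof (cases "i = Suc j")
    case False
    then have "t i \<le> t j" using Suc by simp
    also have "t j < t (Suc j)" using assms(1) Suc.prems by simp
    finally show ?thesis by simp
  qed simp
qed

lemma e_props:
  shows "cbv (\<lambda>t. if t \<in> {0..1} then 1 else 0)" and "bv_norm (\<lambda>t. if t \<in> {0..1} then 1 else 0) = 1"
proof -
  let ?e = "\<lambda>t::real. if t \<in> {0..1} then 1 else (0::real)"
  have vs: "var_sums ?e = {0}"
  proof -
    have "s = 0" if sin: "s \<in> var_sums ?e" for s
    proof -
      obtain t n where s: "s = (\<Sum>i<n. \<bar>?e (t (Suc i)) - ?e (t i)\<bar>)"
        and p: "t 0 = 0" "t n = 1" "\<forall>i<n. t i < t (Suc i)"
        using sin unfolding var_sums_def by blast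
      have "\<And>i. i \<le> n \<Longrightarrow> t i \<in> {0..1}"
        using part_mono[OF p(3), of 0] part_mono[OF p(3), of _ n] p(1,2) by auto
      then have "\<And>i. i < n \<Longrightarrow> \<bar>?e (t (Suc i)) - ?e (t i)\<bar> = 0" by simp
      then show ?thesis unfolding s by simp
    qed
    then show ?thesis using var_sums_ne[of ?e] by blast
  qed
  show "cbv ?e" unfolding cbv_def bounded_var_def vs
    by (auto intro: continuous_on_cong[THEN iffD1, OF refl _ continuous_on_const[of _ 1]])
  show "bv_norm ?e = 1" unfolding bv_norm_def var01_def vs by simp
qed

lemma ne_set: "{f x | x. cbv x \<and> bv_norm x \<le> 1} \<noteq> {}"
proof -
  have "f (\<lambda>t. 0) \<in> {f x | x. cbv x \<and> bv_norm x \<le> 1}"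
    by (rule CollectI, rule exI[of _ "\<lambda>t. 0"]) (simp add: cbv_zero)
  then show ?thesis by blast
qed

lemma dual_lin:
  assumes "cbv_dual a" "cbv f" "cbv g"
  shows "a (\<lambda>t. c1 * f t + c2 * g t) = c1 * a f + c2 * a g"
proof -
  have "a (\<lambda>t. c1 * f t + c2 * g t) = a (\<lambda>t. c1 * f t) + a (\<lambda>t. c2 * g t)"
    using assms cbv_scale(1) unfolding cbv_dual_def by blast
  then show ?thesis using assms unfolding cbv_dual_def by simp
qed

theorem lemma4p3:
  fixes \<alpha> \<beta> :: "(real \<Rightarrow> real) \<Rightarrow> real" and v w :: "real \<Rightarrow> real"
    and F1 :: "(real \<Rightarrow> real) \<Rightarrow> (real \<Rightarrow> real)"
  assumes "cbv_dual \<alpha>" and "cbv_dual \<beta>" and "cbv v" and "cbv w"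
    and "\<alpha> (\<lambda>t. if t \<in> {0..1} then 1 else 0) = 0"
    and "\<beta> (\<lambda>t. if t \<in> {0..1} then 1 else 0) = 0"
    and "\<forall>t\<in>{0..1}. v t + w t = 1"
    and "F1 = (\<lambda>x t. \<alpha> x * v t + \<beta> x * w t)"
  shows "cbv_bounded_linear F1
    \<and> op_norm F1 \<le> dual_norm \<alpha> + dual_norm (\<lambda>x. \<alpha> x - \<beta> x) * bv_norm w
    \<and> (\<forall>n. op_norm (F1 ^^ (n + 2)) \<le> dual_norm (\<lambda>x. \<alpha> x - \<beta> x) * \<bar>\<alpha> v - \<beta> v\<bar> ^ n
            * bv_norm (\<lambda>t. \<alpha> v * v t + \<beta> v * w t))
    \<and> spec_radius F1 \<le> \<bar>\<alpha> v - \<beta> v\<bar>"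
proof -
  note A = assms(1) and B = assms(2) and cv = assms(3) and cw = assms(4)
  define e where "e = (\<lambda>t::real. if t \<in> {0..1} then 1 else (0::real))"
  define g where "g = (\<lambda>x. \<alpha> x - \<beta> x)"
  define d where "d = \<alpha> v - \<beta> v"
  define u where "u = (\<lambda>t. \<alpha> v * v t + \<beta> v * w t)"
  have ce: "cbv e" and ne: "bv_norm e = 1" using e_props unfolding e_def by auto
  have vw0: "\<And>t. t \<notin> {0..1} \<Longrightarrow> v t = 0 \<and> w t = 0" using cv cw unfolding cbv_def by auto
  have vw: "(\<lambda>t. 1 * v t + 1 * w t) = e"
    unfolding e_def using assms(7) vw0 by (auto simp: fun_eq_iff)
  have aw: "\<alpha> w = - \<alpha> v" using dual_lin[OF A cv cw, of 1 1] assms(5) vw unfolding e_def by simp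
  have bw: "\<beta> w = - \<beta> v" using dual_lin[OF B cv cw, of 1 1] assms(6) vw unfolding e_def by simp
  have cu: "cbv u" unfolding u_def using cbv_lin(1)[OF cv cw] .
  have Fx: "\<And>x. F1 x = (\<lambda>t. \<alpha> x * v t + \<beta> x * w t)" using assms(8) by simp
  have Fkey: "\<And>a b. F1 (\<lambda>t. a * v t + b * w t) = (\<lambda>t. (a - b) * u t)"
    unfolding Fx dual_lin[OF A cv cw] dual_lin[OF B cv cw] aw bw u_def
    by (auto simp: fun_eq_iff algebra_simps)
  have pow: "(F1 ^^ (n + 2)) x = (\<lambda>t. (g x * d ^ n) * u t)" if "cbv x" for x n
  proof (induction n)
    case 0
    show ?case by (simp add: Fx[of x] Fkey g_def)
  next
    case (Suc n)
    have "(F1 ^^ (Suc n + 2)) x = F1 ((F1 ^^ (n + 2)) x)" by simp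
    also have "\<dots> = F1 (\<lambda>t. (g x * d ^ n * \<alpha> v) * v t + (g x * d ^ n * \<beta> v) * w t)"
      unfolding Suc u_def by (simp add: algebra_simps)
    also have "\<dots> = (\<lambda>t. (g x * d ^ Suc n) * u t)"
      unfolding Fkey d_def by (simp add: fun_eq_iff algebra_simps)
    finally show ?case .
  qed
  obtain C1 where C1: "\<forall>x. cbv x \<longrightarrow> \<bar>\<alpha> x\<bar> \<le> C1 * bv_norm x" using A unfolding cbv_dual_def by blast
  obtain C2 where C2: "\<forall>x. cbv x \<longrightarrow> \<bar>\<beta> x\<bar> \<le> C2 * bv_norm x" using B unfolding cbv_dual_def by blast
  have gbd: "\<exists>C. \<forall>x. cbv x \<longrightarrow> \<bar>g x\<bar> \<le> C * bv_norm x"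
  proof (intro exI allI impI)
    fix x assume "cbv x"
    then have "\<bar>\<alpha> x\<bar> \<le> C1 * bv_norm x" "\<bar>\<beta> x\<bar> \<le> C2 * bv_norm x" using C1 C2 by auto
    then show "\<bar>g x\<bar> \<le> (C1 + C2) * bv_norm x" unfolding g_def by (simp add: algebra_simps)
  qed
  have gsc: "\<forall>c x. cbv x \<longrightarrow> g (\<lambda>t. c * x t) = c * g x"
    using A B unfolding cbv_dual_def g_def by (simp add: algebra_simps)
  have abd: "\<exists>C. \<forall>x. cbv x \<longrightarrow> \<bar>\<alpha> x\<bar> \<le> C * bv_norm x" using C1 by blast
  have asc: "\<forall>c x. cbv x \<longrightarrow> \<alpha> (\<lambda>t. c * x t) = c * \<alpha> x" using A unfolding cbv_dual_def by blast
  have gb: "\<And>x. cbv x \<Longrightarrow> \<bar>g x\<bar> \<le> dual_norm g * bv_norm x" using dual_bound[OF gsc gbd] by blast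
  have ab: "\<And>x. cbv x \<Longrightarrow> \<bar>\<alpha> x\<bar> \<le> dual_norm \<alpha> * bv_norm x" using dual_bound[OF asc abd] by blast
  have ng: "0 \<le> dual_norm g" using dual_norm_nonneg[OF gbd] .
  have na: "0 \<le> dual_norm \<alpha>" using dual_norm_nonneg[OF abd] .
  have nw: "0 \<le> bv_norm w" using bv_norm_nonneg[OF cw] .
  define Bd where "Bd = dual_norm \<alpha> + dual_norm g * bv_norm w"
  have nBd: "0 \<le> Bd" unfolding Bd_def using ng na nw by simp
  have nb: "bv_norm (F1 x) \<le> Bd * bv_norm x" if cx: "cbv x" for x
  proof -
    have "F1 x = (\<lambda>t. \<alpha> x * e t + (- g x) * w t)"
    proof
      fix t show "F1 x t = \<alpha> x * e t + (- g x) * w t"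
      proof (cases "t \<in> {0..1}")
        case True
        then have h: "v t + w t = 1" using assms(7) by simp
        have "\<alpha> x * v t + \<beta> x * w t = \<alpha> x * (v t + w t) + (\<beta> x - \<alpha> x) * w t"
          by (simp add: algebra_simps)
        then show ?thesis using True h unfolding Fx g_def e_def by simp
      next
        case False then show ?thesis using vw0[OF False] unfolding Fx g_def e_def by auto
      qed
    qed
    then have "bv_norm (F1 x) \<le> \<bar>\<alpha> x\<bar> * bv_norm e + \<bar>- g x\<bar> * bv_norm w"
      using cbv_lin(2)[OF ce cw, of "\<alpha> x" "- g x"] by (simp only:)
    also have "\<dots> = \<bar>\<alpha> x\<bar> + \<bar>g x\<bar> * bv_norm w" using ne by simp
    also have "\<dots> \<le> dual_norm \<alpha> * bv_norm x + (dual_norm g * bv_norm x) * bv_norm w"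
      using ab[OF cx] gb[OF cx] nw by (intro add_mono mult_right_mono) auto
    also have "\<dots> = Bd * bv_norm x" unfolding Bd_def by (simp add: algebra_simps)
    finally show ?thesis .
  qed
  have P1: "cbv_bounded_linear F1"
    unfolding cbv_bounded_linear_def
  proof (intro conjI allI impI)
    fix x assume "cbv x" then show "cbv (F1 x)" unfolding Fx using cbv_lin(1)[OF cv cw] by blast
  next
    fix x y assume "cbv x" "cbv y"
    then show "F1 (\<lambda>t. x t + y t) = (\<lambda>t. F1 x t + F1 y t)"
      using A B unfolding Fx cbv_dual_def by (simp add: fun_eq_iff algebra_simps)
  next
    fix c x assume "cbv x"
    then show "F1 (\<lambda>t. c * x t) = (\<lambda>t. c * F1 x t)"
      using A B unfolding Fx cbv_dual_def by (simp add: fun_eq_iff algebra_simps)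
  next
    show "\<exists>C. \<forall>x. cbv x \<longrightarrow> bv_norm (F1 x) \<le> C * bv_norm x" using nb by blast
  qed
  have z: "cbv (\<lambda>t. 0)" "bv_norm (\<lambda>t. 0) = 0" using cbv_zero by auto
  have P2: "op_norm F1 \<le> Bd"
    unfolding op_norm_def
  proof (rule cSup_least)
    show "{bv_norm (F1 x) |x. cbv x \<and> bv_norm x \<le> 1} \<noteq> {}" by (rule ne_set)
  next
    fix s assume "s \<in> {bv_norm (F1 x) |x. cbv x \<and> bv_norm x \<le> 1}"
    then obtain x where "cbv x" "bv_norm x \<le> 1" "s = bv_norm (F1 x)" by blast
    then show "s \<le> Bd" using nb[of x] nBd by (metis mult_left_le order_trans bv_norm_nonneg)
  qed
  have nu: "0 \<le> bv_norm u" using bv_norm_nonneg[OF cu] .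
  have opn: "op_norm (F1 ^^ (n + 2)) = dual_norm g * bv_norm u * \<bar>d\<bar> ^ n" for n
  proof -
    define M where "M = \<bar>d\<bar> ^ n * bv_norm u"
    define H where "H = F1 ^^ (n + 2)"
    have eq: "bv_norm (H x) = M * \<bar>g x\<bar>" if "cbv x" for x
      unfolding H_def pow[OF that] cbv_scale(2)[OF cu] M_def by (simp add: abs_mult power_abs)
    have seteq: "{bv_norm (H x) |x. cbv x \<and> bv_norm x \<le> 1}
        = (\<lambda>s. M * s) ` {\<bar>g x\<bar> |x. cbv x \<and> bv_norm x \<le> 1}"
    proof (rule set_eqI, rule iffI)
      fix y assume "y \<in> {bv_norm (H x) |x. cbv x \<and> bv_norm x \<le> 1}"
      then obtain x where x: "cbv x" "bv_norm x \<le> 1" "y = bv_norm (H x)" by blast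
      then have "y = M * \<bar>g x\<bar>" using eq by simp
      then show "y \<in> (\<lambda>s. M * s) ` {\<bar>g x\<bar> |x. cbv x \<and> bv_norm x \<le> 1}" using x by blast
    next
      fix y assume "y \<in> (\<lambda>s. M * s) ` {\<bar>g x\<bar> |x. cbv x \<and> bv_norm x \<le> 1}"
      then obtain x where x: "cbv x" "bv_norm x \<le> 1" "y = M * \<bar>g x\<bar>" by blast
      then have "y = bv_norm (H x)" using eq by simp
      then show "y \<in> {bv_norm (H x) |x. cbv x \<and> bv_norm x \<le> 1}" using x by blast
    qed
    have "op_norm (F1 ^^ (n + 2)) = M * dual_norm g"
      unfolding op_norm_def dual_norm_def H_def[symmetric] seteq
      by (rule sup_scale[OF ne_set dual_bdd[OF gbd]]) (simp add: M_def nu)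
    then show ?thesis unfolding M_def by (simp add: algebra_simps)
  qed
  define K where "K = dual_norm g * bv_norm u"
  have nK: "0 \<le> K" unfolding K_def using ng nu by simp
  have lim2: "(\<lambda>n. root (n + 2) (K * \<bar>d\<bar> ^ n)) \<longlonglongrightarrow> (if K = 0 \<or> d = 0 then 0 else \<bar>d\<bar>)"
  proof (cases "K = 0 \<or> d = 0")
    case True
    then have "(\<lambda>n. root (Suc n + 2) (K * \<bar>d\<bar> ^ Suc n)) = (\<lambda>n. 0)" by auto
    then have "(\<lambda>n. root (Suc n + 2) (K * \<bar>d\<bar> ^ Suc n)) \<longlonglongrightarrow> 0" by simp
    then have "(\<lambda>n. root (n + 2) (K * \<bar>d\<bar> ^ n)) \<longlonglongrightarrow> 0"
      by (rule LIMSEQ_imp_Suc[where f = "\<lambda>n. root (n + 2) (K * \<bar>d\<bar> ^ n)"])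
    then show ?thesis using True by simp
  next
    case False
    then have Kp: "K > 0" and dp: "\<bar>d\<bar> > 0" using nK by auto
    have r: "root (n + 2) (K * \<bar>d\<bar> ^ n) = root (n + 2) (K / \<bar>d\<bar>^2) * \<bar>d\<bar>" for n
    proof -
      have "K * \<bar>d\<bar> ^ n = (K / \<bar>d\<bar>^2) * \<bar>d\<bar> ^ (n + 2)" using dp by (simp add: power_add power2_eq_square field_simps)
      then have "root (n + 2) (K * \<bar>d\<bar> ^ n) = root (n + 2) (K / \<bar>d\<bar>^2) * root (n + 2) (\<bar>d\<bar> ^ (n + 2))"
        by (simp only: real_root_mult)
      also have "root (n + 2) (\<bar>d\<bar> ^ (n + 2)) = \<bar>d\<bar>" by (rule real_root_power_cancel) auto
      finally show ?thesis .
    qed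
    have "(\<lambda>n. root (n + 2) (K / \<bar>d\<bar>^2)) \<longlonglongrightarrow> 1"
      using LIMSEQ_ignore_initial_segment[OF LIMSEQ_root_const, of "K / \<bar>d\<bar>^2" 2] Kp dp by simp
    then have "(\<lambda>n. root (n + 2) (K / \<bar>d\<bar>^2) * \<bar>d\<bar>) \<longlonglongrightarrow> 1 * \<bar>d\<bar>"
      by (intro tendsto_mult tendsto_const)
    then show ?thesis using False unfolding r by simp
  qed
  have "(\<lambda>n. root n (op_norm (F1 ^^ n))) \<longlonglongrightarrow> (if K = 0 \<or> d = 0 then 0 else \<bar>d\<bar>)"
  proof (rule LIMSEQ_offset[where k = 2])
    have "(\<lambda>n. root (n + 2) (op_norm (F1 ^^ (n + 2)))) = (\<lambda>n. root (n + 2) (K * \<bar>d\<bar> ^ n))"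
      unfolding opn K_def by (rule refl)
    then show "(\<lambda>n. root (n + 2) (op_norm (F1 ^^ (n + 2)))) \<longlonglongrightarrow> (if K = 0 \<or> d = 0 then 0 else \<bar>d\<bar>)"
      using lim2 by (simp only:)
  qed
  then have P4: "spec_radius F1 \<le> \<bar>d\<bar>" unfolding spec_radius_def using limI by fastforce
  show ?thesis
    using P1 P2 P4 opn unfolding Bd_def g_def d_def u_def by (simp add: algebra_simps)
qed

end
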